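(* Let $A$ be a finite set of alternatives with $|A|\ge 3$, let $N=\{1,\dots,n\}$ with $n\ge 2$, and let $\mathbb{D}$ be a minimally rich domain of linear orders over $A$ that is connected with two distinct neighbours. If $f:\mathbb{D}^n\to A$ is unanimous and strategy-proof, then $f$ satisfies dictatorship.
   Context: A domain is a set $\mathbb{D}$ of linear orders (strict preferences) over $A$; a preference profile is $P=(P_1,\dots,P_n)\in\mathbb{D}^n$. For a linear order $P_i$, $r_k(P_i)$ is its $k$-th ranked alternative. $\mathbb{D}$ is minimally rich if every $a\in A$ is ranked first in some $P_i\in\mathbb{D}$. Two linear orders $P_i,P_i'$ are adjacent if $P_i'$ is obtained from $P_i$ by swapping two consecutively ranked alternatives and leaving all other ranks unchanged. A social choice function (scf) is a map $f:\mathbb{D}^n\to A$. It is unanimous if $f(P)=a$ whenever every voter ranks $a$ first. It is strategy-proof if there is no voter $i$, profile $P$, and $P_i'\in\mathbb{D}$ with $f(P_i',P_{-i})\,P_i\,f(P_i,P_{-i})$. It satisfies dictatorship if there is a voter $i$ with $f(P)=r_1(P_i)$ for all $P\in\mathbb{D}^n$. A path in $\mathbb{D}$ is a sequence of distinct preferences in $\mathbb{D}$ in which consecutive ones are adjacent; $\mathbb{D}$ is connected if any two of its preferences are joined by a path in $\mathbb{D}$. For $\bar{\mathbb{D}}\subseteq\mathbb{D}$, a neighbour of $\bar{\mathbb{D}}$ in $\mathbb{D}$ is a $P_i\in\mathbb{D}\setminus\bar{\mathbb{D}}$ adjacent to some element of $\bar{\mathbb{D}}$. Two preferences $P_i,P_i'\in\mathbb{D}$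 are top-connected in $\mathbb{D}$ if there is a path from $P_i$ to $P_i'$ in $\mathbb{D}$ all of whose members have the same top-ranked alternative. The top-connected closure $\mathbb{D}^{TCC}(P_i)$ is the set of preferences in $\mathbb{D}$ top-connected to $P_i$, together with $P_i$. $\mathbb{D}$ is connected with two distinct neighbours if (1) $\mathbb{D}$ is connected, and (2) for every $P_i\in\mathbb{D}$ there exist two neighbours $P_i',P_i''$ of $\mathbb{D}^{TCC}(P_i)$ in $\mathbb{D}$ with $r_1(P_i')\ne r_1(P_i'')$. *)

theory Defs
  imports Main
begin

text \<open>A linear order (strict preference) over a finite set A is represented by the list
  of all alternatives of A, from best to worst, without repetition.
  The k-th ranked alternative r_k(P) is P ! (k-1).
  A profile for n voters is a list of n preferences; voter i (1-based) is position i-1.\<close>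

definition linear_order_on :: "'a set \<Rightarrow> 'a list \<Rightarrow> bool" where
  "linear_order_on A P \<longleftrightarrow> distinct P \<and> set P = A"

definition is_domain :: "'a set \<Rightarrow> 'a list set \<Rightarrow> bool" where
  "is_domain A D \<longleftrightarrow> (\<forall>P\<in>D. linear_order_on A P)"

definition top_alt :: "'a list \<Rightarrow> 'a" where
  "top_alt P = P ! 0"

definition prefers :: "'a list \<Rightarrow> 'a \<Rightarrow> 'a \<Rightarrow> bool" where
  "prefers P a b \<longleftrightarrow> (\<exists>i j. i < j \<and> j < length P \<and> P ! i = a \<and> P ! j = b)"

definition minimally_rich :: "'a set \<Rightarrow> 'a list set \<Rightarrow> bool" where
  "minimally_rich A D \<longleftrightarrow> (\<forall>a\<in>A. \<exists>P\<in>D. top_alt P = a)"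

definition adjacent :: "'a list \<Rightarrow> 'a list \<Rightarrow> bool" where
  "adjacent P P' \<longleftrightarrow> (\<exists>k. Suc k < length P \<and> P' = P[k := P ! Suc k, Suc k := P ! k])"

definition is_path :: "'a list set \<Rightarrow> 'a list list \<Rightarrow> bool" where
  "is_path D ps \<longleftrightarrow> ps \<noteq> [] \<and> distinct ps \<and> set ps \<subseteq> D \<and>
     (\<forall>k. Suc k < length ps \<longrightarrow> adjacent (ps ! k) (ps ! Suc k))"

definition path_between :: "'a list set \<Rightarrow> 'a list \<Rightarrow> 'a list \<Rightarrow> 'a list list \<Rightarrow> bool" where
  "path_between D P P' ps \<longleftrightarrow> is_path D ps \<and> hd ps = P \<and> last ps = P'"

definition connected_domain :: "'a list set \<Rightarrow> bool" where
  "connected_domain D \<longleftrightarrow> (\<forall>P\<in>D. \<forall>P'\<in>D. \<exists>ps. path_between D P P' ps)"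

definition top_connected :: "'a list set \<Rightarrow> 'a list \<Rightarrow> 'a list \<Rightarrow> bool" where
  "top_connected D P P' \<longleftrightarrow> P \<in> D \<and> P' \<in> D \<and>
     (\<exists>ps. path_between D P P' ps \<and> (\<forall>Q\<in>set ps. top_alt Q = top_alt P))"

definition TCC :: "'a list set \<Rightarrow> 'a list \<Rightarrow> 'a list set" where
  "TCC D P = {P' \<in> D. top_connected D P P'} \<union> {P}"

definition neighbour :: "'a list set \<Rightarrow> 'a list set \<Rightarrow> 'a list \<Rightarrow> bool" where
  "neighbour D S P \<longleftrightarrow> P \<in> D - S \<and> (\<exists>Q\<in>S. adjacent Q P)"

definition connected_two_neighbours :: "'a list set \<Rightarrow> bool" where
  "connected_two_neighbours D \<longleftrightarrow> connected_domain D \<and>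
     (\<forall>P\<in>D. \<exists>P' P''. neighbour D (TCC D P) P' \<and> neighbour D (TCC D P) P'' \<and>
        top_alt P' \<noteq> top_alt P'')"

definition profiles :: "'a list set \<Rightarrow> nat \<Rightarrow> 'a list list set" where
  "profiles D n = {Ps. length Ps = n \<and> set Ps \<subseteq> D}"

definition unanimous :: "'a list set \<Rightarrow> nat \<Rightarrow> ('a list list \<Rightarrow> 'a) \<Rightarrow> bool" where
  "unanimous D n f \<longleftrightarrow> (\<forall>Ps\<in>profiles D n. \<forall>a.
      (\<forall>i<n. top_alt (Ps ! i) = a) \<longrightarrow> f Ps = a)"

definition strategy_proof :: "'a list set \<Rightarrow> nat \<Rightarrow> ('a list list \<Rightarrow> 'a) \<Rightarrow> bool" where
  "strategy_proof D n f \<longleftrightarrow> (\<forall>Ps\<in>profiles D n. \<forall>i<n. \<forall>P'\<in>D.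
      \<not> prefers (Ps ! i) (f (Ps[i := P'])) (f Ps))"

definition dictatorial :: "'a list set \<Rightarrow> nat \<Rightarrow> ('a list list \<Rightarrow> 'a) \<Rightarrow> bool" where
  "dictatorial D n f \<longleftrightarrow> (\<exists>i<n. \<forall>Ps\<in>profiles D n. f Ps = top_alt (Ps ! i))"

end

theory Submission
  imports Defs
begin


definition sw :: "nat \<Rightarrow> 'a list \<Rightarrow> 'a list" where
  "sw k P = P[k := P ! Suc k, Suc k := P ! k]"

definition wp :: "'a list \<Rightarrow> 'a \<Rightarrow> 'a \<Rightarrow> bool" where
  "wp P x y \<longleftrightarrow> x = y \<or> prefers P x y"

lemma adjacent_sw: "adjacent P P' \<longleftrightarrow> (\<exists>k. Suc k < length P \<and> P' = sw k P)"
  unfolding adjacent_def sw_def by simp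

lemma sw_length[simp]: "length (sw k P) = length P"
  unfolding sw_def by simp

lemma sw_nth: "Suc k < length P \<Longrightarrow> i < length P \<Longrightarrow>
  sw k P ! i = (if i = k then P ! Suc k else if i = Suc k then P ! k else P ! i)"
  unfolding sw_def by (auto simp: nth_list_update)

lemma sw_sw: "Suc k < length P \<Longrightarrow> sw k (sw k P) = P"
  by (rule nth_equalityI) (auto simp: sw_nth)

lemma sw_set: "Suc k < length P \<Longrightarrow> set (sw k P) = set P"
proof -
  assume a: "Suc k < length P"
  have "set (sw k P) \<subseteq> set P"
  proof
    fix x assume "x \<in> set (sw k P)"
    then obtain i where "i < length P" "sw k P ! i = x" by (auto simp: in_set_conv_nth)
    then show "x \<in> set P" using a by (auto simp: sw_nth split: if_splits)
  qed
  moreover have "set P \<subseteq> set (sw k P)"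
  proof
    fix x assume "x \<in> set P"
    then obtain i where i: "i < length P" "P ! i = x" by (auto simp: in_set_conv_nth)
    define j where "j = (if i = k then Suc k else if i = Suc k then k else i)"
    have "j < length P" "sw k P ! j = x" using a i by (auto simp: j_def sw_nth)
    then show "x \<in> set (sw k P)" by (metis nth_mem sw_length)
  qed
  ultimately show ?thesis by blast
qed

lemma sw_distinct: "Suc k < length P \<Longrightarrow> distinct P \<Longrightarrow> distinct (sw k P)"
  using card_distinct[of "sw k P"] distinct_card[of P] sw_set[of k P] by simp

lemma sw0_0: "Suc 0 < length P \<Longrightarrow> sw 0 P ! 0 = P ! 1"
  using sw_nth[of 0 P 0] by (cases P) auto
lemma sw0_1: "Suc 0 < length P \<Longrightarrow> sw 0 P ! 1 = P ! 0"
  by (simp add: sw_nth)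
lemma swk_0: "Suc k < length P \<Longrightarrow> k \<noteq> 0 \<Longrightarrow> sw k P ! 0 = P ! 0"
  using sw_nth[of k P 0] by (cases P) auto

lemma prefers_in: "prefers P x y \<Longrightarrow> x \<in> set P \<and> y \<in> set P"
  unfolding prefers_def by auto

lemma prefers_asym: "distinct P \<Longrightarrow> prefers P x y \<Longrightarrow> \<not> prefers P y x"
proof
  assume d: "distinct P" and "prefers P x y" "prefers P y x"
  then obtain i j i' j' where a: "i < j" "j < length P" "P ! i = x" "P ! j = y"
    and b: "i' < j'" "j' < length P" "P ! i' = y" "P ! j' = x"
    unfolding prefers_def by blast
  have "i = j'" using d a b nth_eq_iff_index_eq[of P i j'] by auto
  moreover have "j = i'" using d a b nth_eq_iff_index_eq[of P j i'] by auto
  ultimately show False using a b by simp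
qed

lemma prefers_trans: "distinct P \<Longrightarrow> prefers P x y \<Longrightarrow> prefers P y z \<Longrightarrow> prefers P x z"
proof -
  assume d: "distinct P" and "prefers P x y" "prefers P y z"
  then obtain i j i' j' where a: "i < j" "j < length P" "P ! i = x" "P ! j = y"
    and b: "i' < j'" "j' < length P" "P ! i' = y" "P ! j' = z"
    unfolding prefers_def by blast
  have "j = i'" using d a b nth_eq_iff_index_eq[of P j i'] by auto
  then show "prefers P x z" unfolding prefers_def using a b by (intro exI[of _ i] exI[of _ j']) auto
qed

lemma prefers_total: "x \<in> set P \<Longrightarrow> y \<in> set P \<Longrightarrow> x \<noteq> y \<Longrightarrow> prefers P x y \<or> prefers P y x"
proof -
  assume "x \<in> set P" "y \<in> set P" "x \<noteq> y"
  then obtain i j where a: "i < length P" "P ! i = x" "j < length P" "P ! j = y"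
    by (auto simp: in_set_conv_nth)
  with \<open>x \<noteq> y\<close> have "i \<noteq> j" by auto
  then have "i < j \<or> j < i" by linarith
  then show ?thesis unfolding prefers_def using a by blast
qed

lemma prefers_top: "distinct P \<Longrightarrow> \<not> prefers P y (P ! 0)"
proof
  assume d: "distinct P" and "prefers P y (P ! 0)"
  then obtain i j where a: "i < j" "j < length P" "P ! j = P ! 0"
    unfolding prefers_def by blast
  moreover have "0 < length P" using a(1,2) by linarith
  ultimately have "j = 0" using d nth_eq_iff_index_eq[of P j 0] by auto
  then show False using a by simp
qed

lemma prefers_top2: "distinct P \<Longrightarrow> P \<noteq> [] \<Longrightarrow> y \<in> set P \<Longrightarrow> y \<noteq> P ! 0 \<Longrightarrow> prefers P (P ! 0) y"
proof -
  assume "distinct P" "P \<noteq> []" "y \<in> set P" "y \<noteq> P ! 0"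
  moreover have "P ! 0 \<in> set P" using \<open>P \<noteq> []\<close> by simp
  ultimately show ?thesis using prefers_top[of P y] prefers_total[of "P ! 0" P y] by blast
qed

lemma prefers_sec: "distinct P \<Longrightarrow> Suc 0 < length P \<Longrightarrow> prefers P x (P ! 1) \<Longrightarrow> x = P ! 0"
proof -
  assume d: "distinct P" and l: "Suc 0 < length P" and "prefers P x (P ! 1)"
  then obtain i j where a: "i < j" "j < length P" "P ! i = x" "P ! j = P ! 1"
    unfolding prefers_def by blast
  then have "j = 1" using d l nth_eq_iff_index_eq[of P j 1] by auto
  then show "x = P ! 0" using a by simp
qed

lemma wp_trans: "distinct P \<Longrightarrow> wp P x y \<Longrightarrow> wp P y z \<Longrightarrow> wp P x z"
  unfolding wp_def using prefers_trans[of P x y z] by blast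

lemma wp_top: "distinct P \<Longrightarrow> wp P x (P ! 0) \<Longrightarrow> x = P ! 0"
  unfolding wp_def using prefers_top[of P x] by blast

lemma wp_sec: "distinct P \<Longrightarrow> Suc 0 < length P \<Longrightarrow> wp P x (P ! 1) \<Longrightarrow> x = P ! 0 \<or> x = P ! 1"
  unfolding wp_def using prefers_sec[of P x] by blast

lemma wp_not_prefers: "distinct P \<Longrightarrow> wp P x y \<Longrightarrow> \<not> prefers P y x"
  unfolding wp_def using prefers_asym[of P x y] prefers_asym[of P x x] by blast

lemma swap_core:
  assumes d: "distinct P" and k: "Suc k < length P"
    and p1: "prefers P u v" and p2: "prefers (sw k P) v u"
  shows "u = P ! k \<and> v = P ! Suc k"
proof -
  from p1 obtain i' j' where ij': "i' < j'" "j' < length P" "P ! i' = u" "P ! j' = v"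
    unfolding prefers_def by blast
  from p2 obtain i j where ij: "i < j" "j < length P" "sw k P ! i = v" "sw k P ! j = u"
    unfolding prefers_def by auto
  define t where "t = (\<lambda>i::nat. if i = k then Suc k else if i = Suc k then k else i)"
  have tl: "\<And>i. i < length P \<Longrightarrow> t i < length P" using k by (auto simp: t_def)
  have swt: "\<And>i. i < length P \<Longrightarrow> sw k P ! i = P ! t i" using k by (auto simp: t_def sw_nth)
  have "P ! t i = P ! j'" using ij ij' swt by auto
  hence e1: "t i = j'" using d tl[of i] ij ij' nth_eq_iff_index_eq[of P "t i" j'] by auto
  have "P ! t j = P ! i'" using ij ij' swt by auto
  hence e2: "t j = i'" using d tl[of j] ij ij' nth_eq_iff_index_eq[of P "t j" i'] by auto
  have "i = k \<and> j = Suc k" using e1 e2 ij ij' unfolding t_def by (auto split: if_splits)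
  then show ?thesis using ij swt k by (auto simp: t_def)
qed




locale tv =
  fixes A :: "'a set" and D :: "'a list set" and F :: "'a list \<Rightarrow> 'a list \<Rightarrow> 'a"
  assumes finA: "finite A" and cardA: "card A \<ge> 3"
    and dom: "is_domain A D"
    and ctn: "connected_two_neighbours D"
    and rng: "\<And>P1 P2. P1 \<in> D \<Longrightarrow> P2 \<in> D \<Longrightarrow> F P1 P2 \<in> A"
    and un: "\<And>P. P \<in> D \<Longrightarrow> F P P = P ! 0"
    and sp1: "\<And>P1 P1' P2. P1 \<in> D \<Longrightarrow> P1' \<in> D \<Longrightarrow> P2 \<in> D \<Longrightarrow> \<not> prefers P1 (F P1' P2) (F P1 P2)"
    and sp2: "\<And>P1 P2 P2'. P1 \<in> D \<Longrightarrow> P2 \<in> D \<Longrightarrow> P2' \<in> D \<Longrightarrow> \<not> prefers P2 (F P1 P2') (F P1 P2)"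
begin

lemma tv_swap: "tv A D (\<lambda>x y. F y x)"
  by (unfold_locales) (auto simp: finA cardA dom ctn rng un sp1 sp2)

lemma dD: "P \<in> D \<Longrightarrow> distinct P \<and> set P = A"
  using dom unfolding is_domain_def linear_order_on_def by auto

lemma lenD: "P \<in> D \<Longrightarrow> Suc (Suc 0) < length P"
  using dD[of P] cardA distinct_card[of P] by auto

lemma len1: "P \<in> D \<Longrightarrow> Suc 0 < length P"
  using lenD by fastforce

lemma d01: "P \<in> D \<Longrightarrow> P ! 0 \<noteq> P ! 1"
proof -
  assume P: "P \<in> D"
  have l0: "0 < length P" using len1[OF P] by linarith
  have "(P ! 0 = P ! 1) = (0 = (1::nat))"
    using nth_eq_iff_index_eq[OF conjunct1[OF dD[OF P]] l0] len1[OF P] by simp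
  thus ?thesis by simp
qed

lemma inA: "P \<in> D \<Longrightarrow> i < length P \<Longrightarrow> P ! i \<in> A"
  using dD[of P] nth_mem by blast

lemma in01: "P \<in> D \<Longrightarrow> P ! 0 \<in> A \<and> P ! 1 \<in> A"
proof -
  assume P: "P \<in> D"
  have "0 < length P" "1 < length P" using len1[OF P] by auto
  thus ?thesis using inA[OF P] by auto
qed

lemma sw0D: "P \<in> D \<Longrightarrow> sw 0 P ! 0 = P ! 1 \<and> sw 0 P ! 1 = P ! 0 \<and> sw 0 (sw 0 P) = P"
  using len1[of P] sw0_0 sw0_1 sw_sw by fastforce

lemma W1: "P1 \<in> D \<Longrightarrow> P1' \<in> D \<Longrightarrow> P2 \<in> D \<Longrightarrow> wp P1 (F P1 P2) (F P1' P2)"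
  using sp1[of P1 P1' P2] rng[of P1 P2] rng[of P1' P2] dD[of P1] prefers_total[of "F P1 P2" P1 "F P1' P2"]
  unfolding wp_def by auto

lemma W2: "P1 \<in> D \<Longrightarrow> P2 \<in> D \<Longrightarrow> P2' \<in> D \<Longrightarrow> wp P2 (F P1 P2) (F P1 P2')"
  using sp2[of P1 P2 P2'] rng[of P1 P2] rng[of P1 P2'] dD[of P2] prefers_total[of "F P1 P2" P2 "F P1 P2'"]
  unfolding wp_def by auto

lemma ML1: "X0 \<in> D \<Longrightarrow> X \<in> D \<Longrightarrow> Y \<in> D \<Longrightarrow> F X0 Y = X ! 0 \<Longrightarrow> F X Y = X ! 0"
  using W1[of X X0 Y] wp_top[of X "F X Y"] dD[of X] by auto

lemma ML2: "X \<in> D \<Longrightarrow> Y0 \<in> D \<Longrightarrow> Y \<in> D \<Longrightarrow> F X Y0 = Y ! 0 \<Longrightarrow> F X Y = Y ! 0"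
  using W2[of X Y Y0] wp_top[of Y "F X Y"] dD[of Y] by auto

lemma sec1: "X \<in> D \<Longrightarrow> Y \<in> D \<Longrightarrow> Z \<in> D \<Longrightarrow> F Z Y = X ! 1 \<Longrightarrow> F X Y = X ! 0 \<or> F X Y = X ! 1"
  using W1[of X Z Y] wp_sec[of X "F X Y"] dD[of X] len1[of X] by auto

lemma sec2: "X \<in> D \<Longrightarrow> Y \<in> D \<Longrightarrow> Z \<in> D \<Longrightarrow> F X Z = Y ! 1 \<Longrightarrow> F X Y = Y ! 0 \<or> F X Y = Y ! 1"
  using W2[of X Y Z] wp_sec[of Y "F X Y"] dD[of Y] len1[of Y] by auto

lemma LL:
  assumes "X \<in> D" "P \<in> D" "Suc k < length P" "sw k P \<in> D"
  shows "F X (sw k P) = F X P \<or> (F X P = P ! k \<and> F X (sw k P) = P ! Suc k)"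
proof (cases "F X (sw k P) = F X P")
  case False
  have "wp P (F X P) (F X (sw k P))" using W2 assms by auto
  hence p1: "prefers P (F X P) (F X (sw k P))" using False unfolding wp_def by auto
  have "wp (sw k P) (F X (sw k P)) (F X P)" using W2 assms by auto
  hence p2: "prefers (sw k P) (F X (sw k P)) (F X P)" using False unfolding wp_def by auto
  show ?thesis using swap_core[OF _ assms(3) p1 p2] dD[of P] assms by auto
qed simp

lemma CP:
  assumes D: "Q \<in> D" "N \<in> D" "X \<in> D" "Y \<in> D"
    and e: "Q ! 1 = N ! 0" "N ! 1 = Q ! 0" "X ! 0 = Q ! 0" "Y ! 0 = N ! 0"
  shows "F X Y = F Q N"
proof -
  have bc: "Q ! 0 \<noteq> N ! 0" using d01[of Q] e D by auto
  have XN: "F X N = N ! 0 \<or> F X N = N ! 1" using sec2[of X N X] un[of X] D e by auto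
  have QY: "F Q Y = Q ! 0 \<or> F Q Y = Q ! 1" using sec1[of Q Y Y] un[of Y] D e by auto
  have 1: "F Q N = Q ! 0" if "F X Y \<noteq> N ! 0"
  proof -
    have "F X N \<noteq> N ! 0" using ML2[of X N Y] D e that by auto
    hence "F X N = Q ! 0" using XN e by auto
    hence "wp Q (F Q N) (Q ! 0)" using W1[of Q X N] D by auto
    thus ?thesis using wp_top[of Q "F Q N"] dD[of Q] D by auto
  qed
  have 2: "F Q N = N ! 0" if "F X Y \<noteq> Q ! 0"
  proof -
    have "F Q Y \<noteq> Q ! 0" using ML1[of Q X Y] D e that by auto
    hence "F Q Y = N ! 0" using QY e by auto
    hence "wp N (F Q N) (N ! 0)" using W2[of Q N Y] D by auto
    thus ?thesis using wp_top[of N "F Q N"] dD[of N] D by auto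
  qed
  show ?thesis
  proof (cases "F X Y = Q ! 0")
    case True
    then show ?thesis using 1 bc by auto
  next
    case False
    then have e2: "F Q N = N ! 0" using 2 by auto
    have "F X Y = N ! 0" using 1 e2 bc by auto
    then show ?thesis using e2 by simp
  qed
qed

lemma C1:
  assumes D: "Wa \<in> D" "Q \<in> D" "sw 0 Wa \<in> D" "sw 0 Q \<in> D"
    and e: "Q ! 0 = Wa ! 0" "Wa ! 1 \<noteq> Q ! 1" and h: "F (sw 0 Wa) Q = Wa ! 1"
  shows "F Wa (sw 0 Q) = Wa ! 0"
proof (rule ccontr)
  assume ne: "F Wa (sw 0 Q) \<noteq> Wa ! 0"
  define N where "N = sw 0 Q"
  define Wa' where "Wa' = sw 0 Wa"
  have N: "N ! 0 = Q ! 1" "N ! 1 = Q ! 0" using sw0D[of Q] D by (auto simp: N_def)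
  have W': "Wa' ! 0 = Wa ! 1" "Wa' ! 1 = Wa ! 0" using sw0D[of Wa] D by (auto simp: Wa'_def)
  have "F Wa N = N ! 0 \<or> F Wa N = N ! 1" using sec2[of Wa N Wa] un[of Wa] D N e by (auto simp: N_def)
  hence u: "F Wa N = Q ! 1" using ne N e by (auto simp: N_def)
  have a1: "wp Wa (F Wa N) (F Wa' N)" using W1 D by (auto simp: N_def Wa'_def)
  have a2: "wp Wa' (F Wa' N) (F Wa N)" using W1 D by (auto simp: N_def Wa'_def)
  have x: "F Wa' N = Q ! 1"
  proof (rule ccontr)
    assume "F Wa' N \<noteq> Q ! 1"
    hence "prefers Wa (Q ! 1) (F Wa' N)" "prefers (sw 0 Wa) (F Wa' N) (Q ! 1)"
      using a1 a2 u unfolding wp_def Wa'_def by auto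
    hence "Q ! 1 = Wa ! 0" using swap_core[of Wa 0] dD[of Wa] len1[of Wa] D by auto
    thus False using d01[of Q] D e by auto
  qed
  have "wp Q (F Wa' Q) (F Wa' N)" using W2 D by (auto simp: N_def Wa'_def)
  hence "wp Q (Wa ! 1) (Q ! 1)" using h x by (simp add: Wa'_def)
  hence "Wa ! 1 = Q ! 0 \<or> Wa ! 1 = Q ! 1" using wp_sec[of Q] dD[of Q] len1[of Q] D by auto
  thus False using d01[of Wa] D e by auto
qed

lemma C2:
  assumes D: "Wa \<in> D" "Q \<in> D" "sw 0 Wa \<in> D" "sw 0 Q \<in> D"
    and e: "Q ! 0 = Wa ! 0" "Wa ! 1 \<noteq> Q ! 1" and h: "F Q (sw 0 Wa) = Wa ! 1"
  shows "F (sw 0 Q) Wa = Wa ! 0"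
  using tv.C1[OF tv_swap, of Wa Q] assms by auto

definition Dom :: "'a \<Rightarrow> 'a \<Rightarrow> bool" where
  "Dom a b \<longleftrightarrow> (\<forall>X\<in>D. \<forall>Y\<in>D. X ! 0 = a \<longrightarrow> Y ! 0 = b \<longrightarrow> F X Y = a \<and> F Y X = a)"

lemma DomStep:
  assumes D: "W \<in> D" "Q \<in> D" "sw 0 W \<in> D" "sw 0 Q \<in> D"
    and e: "Q ! 0 = W ! 0" "W ! 1 \<noteq> Q ! 1" and dm: "Dom (W ! 1) (W ! 0)"
  shows "Dom (W ! 0) (Q ! 1)"
proof -
  have N0: "sw 0 Q ! 0 = Q ! 1" and N1: "sw 0 Q ! 1 = Q ! 0" using sw0D[OF D(2)] by auto
  have W0: "sw 0 W ! 0 = W ! 1" and W1: "sw 0 W ! 1 = W ! 0" using sw0D[OF D(1)] by auto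
  have dmi: "F (sw 0 W) Q = W ! 1 \<and> F Q (sw 0 W) = W ! 1"
    using dm[unfolded Dom_def, rule_format, OF D(3) D(2)] W0 e by simp
  have f1: "F W (sw 0 Q) = W ! 0" by (rule C1[OF D e]) (use dmi in simp)
  have f2: "F (sw 0 Q) W = W ! 0" by (rule C2[OF D e]) (use dmi in simp)
  have g1: "F W (sw 0 Q) = F Q (sw 0 Q)" by (rule CP) (use D N0 N1 e in auto)
  have g2: "F (sw 0 Q) W = F (sw 0 Q) Q" by (rule CP) (use D N0 N1 e in auto)
  show ?thesis unfolding Dom_def
  proof (intro ballI impI conjI)
    fix X Y assume XY: "X \<in> D" "Y \<in> D" "X ! 0 = W ! 0" "Y ! 0 = Q ! 1"
    have "F X Y = F Q (sw 0 Q)" by (rule CP) (use D N0 N1 e XY in auto)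
    thus "F X Y = W ! 0" using f1 g1 by simp
    have "F Y X = F (sw 0 Q) Q" by (rule CP) (use D N0 N1 e XY in auto)
    thus "F Y X = W ! 0" using f2 g2 by simp
  qed
qed

definition inS :: "'a \<Rightarrow> 'a list \<Rightarrow> bool" where
  "inS z Y \<longleftrightarrow> (\<exists>X\<in>D. F X Y = z)"

lemma Keep:
  assumes R: "R \<in> D" "Suc k < length R" "sw k R \<in> D"
    and m: "\<forall>u\<in>U. inS u R"
    and o: "\<forall>u\<in>U. \<exists>Ob\<in>D. Ob ! 0 = u \<and> (Ob ! 1 \<in> U \<or> inS (Ob ! 1) (sw k R)) \<and> (\<forall>Y\<in>D. F Ob Y \<noteq> Ob ! 1)"
  shows "\<forall>u\<in>U. inS u (sw k R)"
proof
  fix u assume u: "u \<in> U"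
  show "inS u (sw k R)"
  proof (rule ccontr)
    assume nu: "\<not> inS u (sw k R)"
    obtain Ob where Ob: "Ob \<in> D" "Ob ! 0 = u" "Ob ! 1 \<in> U \<or> inS (Ob ! 1) (sw k R)" "\<forall>Y\<in>D. F Ob Y \<noteq> Ob ! 1"
      using o u by blast
    obtain X where X: "X \<in> D" "F X R = u" using m u unfolding inS_def by blast
    have FO: "F Ob R = u" using ML1[of X Ob R] X Ob R by auto
    have "F Ob (sw k R) \<noteq> u" using nu Ob R unfolding inS_def by auto
    hence uk: "u = R ! k" using LL[of Ob R k] FO Ob R by auto
    have s: "inS (Ob ! 1) (sw k R)"
    proof (cases "Ob ! 1 \<in> U")
      case True
      then obtain X' where X': "X' \<in> D" "F X' R = Ob ! 1" using m unfolding inS_def by blast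
      have "Ob ! 1 \<noteq> u" using d01[of Ob] Ob by auto
      hence "F X' (sw k R) = Ob ! 1" using LL[of X' R k] X' R uk by auto
      thus ?thesis using X' unfolding inS_def by auto
    next
      case False thus ?thesis using Ob by auto
    qed
    then obtain X'' where X'': "X'' \<in> D" "F X'' (sw k R) = Ob ! 1" unfolding inS_def by blast
    have "F Ob (sw k R) = Ob ! 0 \<or> F Ob (sw k R) = Ob ! 1" using sec1[of Ob "sw k R" X''] X'' Ob R by auto
    thus False using nu Ob R unfolding inS_def by auto
  qed
qed

lemma Keep_path:
  assumes p: "is_path D ps" and t: "\<forall>R\<in>set ps. R ! 0 = b"
    and m: "\<forall>u\<in>U. inS u (ps ! 0)"
    and o: "\<forall>u\<in>U. \<exists>Ob\<in>D. Ob ! 0 = u \<and> (Ob ! 1 \<in> U \<or> Ob ! 1 = b) \<and> (\<forall>Y\<in>D. F Ob Y \<noteq> Ob ! 1)"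
  shows "i < length ps \<Longrightarrow> \<forall>u\<in>U. inS u (ps ! i)"
proof (induction i)
  case 0 thus ?case using m by simp
next
  case (Suc i)
  have pD: "\<And>j. j < length ps \<Longrightarrow> ps ! j \<in> D" using p unfolding is_path_def by auto
  have "adjacent (ps ! i) (ps ! Suc i)" using p Suc unfolding is_path_def by auto
  then obtain k where k: "Suc k < length (ps ! i)" "ps ! Suc i = sw k (ps ! i)"
    unfolding adjacent_sw by blast
  have bS: "inS b (ps ! Suc i)"
  proof -
    have "F (ps ! Suc i) (ps ! Suc i) = b" using un pD[of "Suc i"] t Suc.prems by auto
    thus ?thesis using pD[of "Suc i"] Suc.prems unfolding inS_def by blast
  qed
  have "\<forall>u\<in>U. inS u (sw k (ps ! i))"
    apply (rule Keep[of "ps ! i" k U])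
    using pD[of i] pD[of "Suc i"] Suc k bS o by auto
  thus ?case using k by simp
qed


lemma TCC_path:
  assumes W: "W \<in> D" and Q: "Q \<in> TCC D W"
  shows "\<exists>ps. is_path D ps \<and> hd ps = W \<and> last ps = Q \<and> (\<forall>R\<in>set ps. R ! 0 = W ! 0)"
proof (cases "Q = W")
  case True
  have "is_path D [W]" using W unfolding is_path_def by auto
  thus ?thesis using True by (intro exI[of _ "[W]"]) auto
next
  case False
  hence "top_connected D W Q" using Q unfolding TCC_def by auto
  thus ?thesis unfolding top_connected_def path_between_def top_alt_def by blast
qed

lemma path_take:
  assumes p: "is_path D ps" and i: "i < length ps"
  shows "is_path D (take (Suc i) ps) \<and> hd (take (Suc i) ps) = hd ps \<and> last (take (Suc i) ps) = ps ! i"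
proof -
  have ne: "take (Suc i) ps \<noteq> []" using i by (cases ps) auto
  have len: "length (take (Suc i) ps) = Suc i" using i by simp
  have "is_path D (take (Suc i) ps)"
    unfolding is_path_def
  proof (intro conjI allI impI)
    show "take (Suc i) ps \<noteq> []" by (rule ne)
    show "distinct (take (Suc i) ps)" using p unfolding is_path_def by auto
    show "set (take (Suc i) ps) \<subseteq> D" using p set_take_subset unfolding is_path_def by fast
    fix k assume k: "Suc k < length (take (Suc i) ps)"
    have "adjacent (ps ! k) (ps ! Suc k)" using p k len i unfolding is_path_def by auto
    thus "adjacent (take (Suc i) ps ! k) (take (Suc i) ps ! Suc k)" using k len by simp
  qed
  moreover have "hd (take (Suc i) ps) = hd ps" using i by (cases ps) auto
  moreover have "last (take (Suc i) ps) = ps ! i" using ne len by (simp add: last_conv_nth)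
  ultimately show ?thesis by blast
qed

lemma path_snoc:
  assumes p: "is_path D ps" and N: "N \<in> D" "N \<notin> set ps" and a: "adjacent (last ps) N"
  shows "is_path D (ps @ [N]) \<and> hd (ps @ [N]) = hd ps \<and> last (ps @ [N]) = N"
proof -
  have ne: "ps \<noteq> []" using p unfolding is_path_def by auto
  have "is_path D (ps @ [N])"
    unfolding is_path_def
  proof (intro conjI allI impI)
    show "ps @ [N] \<noteq> []" by simp
    show "distinct (ps @ [N])" using p N unfolding is_path_def by auto
    show "set (ps @ [N]) \<subseteq> D" using p N unfolding is_path_def by auto
    fix k assume k: "Suc k < length (ps @ [N])"
    show "adjacent ((ps @ [N]) ! k) ((ps @ [N]) ! Suc k)"
    proof (cases "Suc k < length ps")
      case True
      thus ?thesis using p unfolding is_path_def by (auto simp: nth_append)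
    next
      case False
      hence "Suc k = length ps" using k by simp
      moreover have "last ps = ps ! k"
      proof -
        have "length ps - 1 = k" using \<open>Suc k = length ps\<close> by simp
        thus ?thesis using last_conv_nth[OF ne] by simp
      qed
      ultimately show ?thesis using a by (auto simp: nth_append)
    qed
  qed
  thus ?thesis using ne by simp
qed

lemma nb_sw0:
  assumes W: "W \<in> D" and nb: "neighbour D (TCC D W) N"
  shows "\<exists>Q. Q \<in> TCC D W \<and> Q \<in> D \<and> N \<in> D \<and> N = sw 0 Q \<and> Q ! 0 = W ! 0"
proof -
  from nb obtain Q where N: "N \<in> D" "N \<notin> TCC D W" and Q: "Q \<in> TCC D W" and a: "adjacent Q N"
    unfolding neighbour_def by auto
  obtain ps where ps: "is_path D ps" "hd ps = W" "last ps = Q" "\<forall>R\<in>set ps. R ! 0 = W ! 0"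
    using TCC_path[OF W Q] by blast
  have Qs: "Q \<in> set ps" using ps unfolding is_path_def by auto
  have QD: "Q \<in> D" using Qs ps unfolding is_path_def by auto
  have Q0: "Q ! 0 = W ! 0" using Qs ps by auto
  obtain k where k: "Suc k < length Q" "N = sw k Q" using a unfolding adjacent_sw by blast
  show ?thesis
  proof (cases "k = 0")
    case True thus ?thesis using QD N k Q0 Q by auto
  next
    case False
    have N0: "N ! 0 = W ! 0" using swk_0[OF k(1) False] k Q0 by simp
    have "N \<in> TCC D W"
    proof (cases "N \<in> set ps")
      case True
      then obtain i where i: "i < length ps" "ps ! i = N" by (auto simp: in_set_conv_nth)
      have "is_path D (take (Suc i) ps) \<and> hd (take (Suc i) ps) = W \<and> last (take (Suc i) ps) = N"
        using path_take[OF ps(1) i(1)] ps i by auto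
      moreover have "\<forall>R\<in>set (take (Suc i) ps). top_alt R = top_alt W"
        using ps(4) set_take_subset[of "Suc i" ps] unfolding top_alt_def by blast
      ultimately have "top_connected D W N" unfolding top_connected_def path_between_def
        using W N by blast
      thus ?thesis unfolding TCC_def using N by auto
    next
      case False
      have "is_path D (ps @ [N]) \<and> hd (ps @ [N]) = W \<and> last (ps @ [N]) = N"
        using path_snoc[OF ps(1) N(1) False] ps a by auto
      moreover have "\<forall>R\<in>set (ps @ [N]). top_alt R = top_alt W"
        using ps(4) N0 unfolding top_alt_def by auto
      ultimately have "top_connected D W N" unfolding top_connected_def path_between_def
        using W N by blast
      thus ?thesis unfolding TCC_def using N by auto
    qed
    thus ?thesis using N by auto
  qed
qed

definition Inv :: "'a list \<Rightarrow> 'a set \<Rightarrow> 'a \<Rightarrow> bool" where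
  "Inv W U a \<longleftrightarrow> W \<in> D \<and> sw 0 W \<in> D \<and> W ! 1 = a \<and> Dom a (W ! 0) \<and> U \<subseteq> A \<and> W ! 0 \<notin> U \<and>
     (\<forall>u\<in>U. inS u W) \<and>
     (\<forall>u\<in>U. \<exists>Ob\<in>D. Ob ! 0 = u \<and> (Ob ! 1 \<in> U \<or> Ob ! 1 = W ! 0) \<and> (\<forall>Y\<in>D. F Ob Y \<noteq> Ob ! 1))"

lemma flow: "Inv W U a \<Longrightarrow> False"
proof (induction "card (A - U)" arbitrary: W U a rule: less_induct)
  case less
  have WD: "W \<in> D" and W'D: "sw 0 W \<in> D" and W1: "W ! 1 = a" and dm: "Dom a (W ! 0)"
    and UA: "U \<subseteq> A" and WU: "W ! 0 \<notin> U" and mW: "\<forall>u\<in>U. inS u W"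
    and ob: "\<forall>u\<in>U. \<exists>Ob\<in>D. Ob ! 0 = u \<and> (Ob ! 1 \<in> U \<or> Ob ! 1 = W ! 0) \<and> (\<forall>Y\<in>D. F Ob Y \<noteq> Ob ! 1)"
    using less.prems unfolding Inv_def by auto
  obtain N1 N2 where n12: "neighbour D (TCC D W) N1" "neighbour D (TCC D W) N2" "N1 ! 0 \<noteq> N2 ! 0"
    using ctn WD unfolding connected_two_neighbours_def top_alt_def by blast
  obtain N where nb: "neighbour D (TCC D W) N" and Na: "N ! 0 \<noteq> a"
  proof (cases "N1 ! 0 = a")
    case True thus ?thesis using that n12 by auto
  next
    case False thus ?thesis using that n12 by auto
  qed
  obtain Q where Q: "Q \<in> TCC D W" "Q \<in> D" "N \<in> D" "N = sw 0 Q" "Q ! 0 = W ! 0"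
    using nb_sw0[OF WD nb] by blast
  obtain ps where ps: "is_path D ps" "hd ps = W" "last ps = Q" "\<forall>R\<in>set ps. R ! 0 = W ! 0"
    using TCC_path[OF WD Q(1)] by blast
  have ne: "ps \<noteq> []" using ps unfolding is_path_def by auto
  have ps0: "ps ! 0 = W" using ps(2) ne by (simp add: hd_conv_nth)
  have psl: "ps ! (length ps - 1) = Q" using ps(3) ne by (simp add: last_conv_nth)
  have mQ: "\<forall>u\<in>U. inS u Q"
    using Keep_path[OF ps(1) ps(4), of U "length ps - 1"] mW ob ps0 psl ne by auto
  define c where "c = Q ! 1"
  define b where "b = W ! 0"
  have N0: "N ! 0 = c" and N1: "N ! 1 = b" using sw0D[OF Q(2)] Q by (auto simp: c_def b_def)
  have swN: "sw 0 N = Q" using sw0D[OF Q(2)] Q by auto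
  have ca: "c \<noteq> a" using Na N0 by simp
  have cb: "c \<noteq> b" using d01[OF Q(2)] Q by (auto simp: c_def b_def)
  have dmbc: "Dom b c" unfolding b_def c_def
    by (rule DomStep) (use WD Q W'D W1 ca dm in \<open>auto simp: c_def\<close>)
  have FQN: "F Q N = b" and FNQ: "F N Q = b"
    using dmbc[unfolded Dom_def, rule_format, OF Q(2) Q(3)] Q N0 by (auto simp: b_def)
  have bA: "b \<in> A" using in01[OF WD] by (simp add: b_def)
  have cU: "c \<notin> U"
  proof
    assume "c \<in> U"
    then obtain X where X: "X \<in> D" "F X Q = c" using mQ unfolding inS_def by blast
    have "F N Q = c" using ML1[OF X(1) Q(3) Q(2)] X N0 by simp
    thus False using FNQ cb by simp
  qed
  have bS: "inS b N" using FQN Q unfolding inS_def by blast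
  have mN: "\<forall>u\<in>U. inS u N"
  proof -
    have "\<forall>u\<in>U. inS u (sw 0 Q)"
    proof (rule Keep[OF Q(2) _ _ mQ])
      show "Suc 0 < length Q" using len1[OF Q(2)] .
      show "sw 0 Q \<in> D" using Q by simp
      show "\<forall>u\<in>U. \<exists>Ob\<in>D. Ob ! 0 = u \<and> (Ob ! 1 \<in> U \<or> inS (Ob ! 1) (sw 0 Q)) \<and> (\<forall>Y\<in>D. F Ob Y \<noteq> Ob ! 1)"
      proof
        fix u assume u: "u \<in> U"
        obtain Ob where Ob: "Ob \<in> D" "Ob ! 0 = u" "Ob ! 1 \<in> U \<or> Ob ! 1 = W ! 0" "\<forall>Y\<in>D. F Ob Y \<noteq> Ob ! 1"
          using ob u by blast
        have "inS b (sw 0 Q)" using bS Q by simp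
        then show "\<exists>Ob\<in>D. Ob ! 0 = u \<and> (Ob ! 1 \<in> U \<or> inS (Ob ! 1) (sw 0 Q)) \<and> (\<forall>Y\<in>D. F Ob Y \<noteq> Ob ! 1)"
          using Ob by (intro bexI[of _ Ob]) (auto simp: b_def)
      qed
    qed
    thus ?thesis using Q by simp
  qed
  have obQ: "\<forall>Y\<in>D. F Q Y \<noteq> Q ! 1"
  proof (intro ballI notI)
    fix Y assume Y: "Y \<in> D" "F Q Y = Q ! 1"
    have "F Q N = N ! 0" using ML2[OF Q(2) Y(1) Q(3)] Y N0 by (simp add: c_def)
    thus False using FQN N0 cb by simp
  qed
  have inv: "Inv N (insert b U) b"
    unfolding Inv_def
  proof (intro conjI)
    show "N \<in> D" using Q by simp
    show "sw 0 N \<in> D" using swN Q by simp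
    show "N ! 1 = b" by (rule N1)
    show "Dom b (N ! 0)" using dmbc N0 by simp
    show "insert b U \<subseteq> A" using bA UA by simp
    show "N ! 0 \<notin> insert b U" using N0 cb cU by simp
    show "\<forall>u\<in>insert b U. inS u N" using bS mN by simp
    show "\<forall>u\<in>insert b U. \<exists>Ob\<in>D. Ob ! 0 = u \<and> (Ob ! 1 \<in> insert b U \<or> Ob ! 1 = N ! 0) \<and> (\<forall>Y\<in>D. F Ob Y \<noteq> Ob ! 1)"
    proof
      fix u assume "u \<in> insert b U"
      then show "\<exists>Ob\<in>D. Ob ! 0 = u \<and> (Ob ! 1 \<in> insert b U \<or> Ob ! 1 = N ! 0) \<and> (\<forall>Y\<in>D. F Ob Y \<noteq> Ob ! 1)"
      proof
        assume "u = b"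
        then show ?thesis using Q obQ N0 by (intro bexI[of _ Q]) (auto simp: b_def c_def)
      next
        assume "u \<in> U"
        then obtain Ob where "Ob \<in> D" "Ob ! 0 = u" "Ob ! 1 \<in> U \<or> Ob ! 1 = b" "\<forall>Y\<in>D. F Ob Y \<noteq> Ob ! 1"
          using ob by (auto simp: b_def)
        then show ?thesis by (intro bexI[of _ Ob]) auto
      qed
    qed
  qed
  have "card (A - insert b U) < card (A - U)"
  proof -
    have "A - insert b U = (A - U) - {b}" by auto
    moreover have "b \<in> A - U" using bA WU by (simp add: b_def)
    moreover have "card ((A - U) - {b}) < card (A - U)"
      by (rule card_Diff1_less) (use finA \<open>b \<in> A - U\<close> in auto)
    ultimately show ?thesis by simp
  qed
  thus False using less.hyps inv by blast
qed

lemma NoDom: "X \<in> D \<Longrightarrow> sw 0 X \<in> D \<Longrightarrow> \<not> Dom (X ! 1) (X ! 0)"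
proof
  assume X: "X \<in> D" "sw 0 X \<in> D" and dm: "Dom (X ! 1) (X ! 0)"
  have s: "sw 0 X ! 0 = X ! 1" "sw 0 X ! 1 = X ! 0" using sw0D[OF X(1)] by auto
  have f: "F (sw 0 X) X = X ! 1" using dm[unfolded Dom_def, rule_format, OF X(2) X(1)] s by simp
  have ob: "\<forall>Y\<in>D. F (sw 0 X) Y \<noteq> sw 0 X ! 1"
  proof (intro ballI notI)
    fix Y assume Y: "Y \<in> D" "F (sw 0 X) Y = sw 0 X ! 1"
    have "F (sw 0 X) X = X ! 0" using ML2[OF X(2) Y(1) X(1)] Y s by simp
    thus False using f d01[OF X(1)] by simp
  qed
  have "Inv X {X ! 1} (X ! 1)"
    unfolding Inv_def
  proof (intro conjI)
    show "{X ! 1} \<subseteq> A" using in01[OF X(1)] by simp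
    show "X ! 0 \<notin> {X ! 1}" using d01[OF X(1)] by simp
    show "\<forall>u\<in>{X ! 1}. inS u X" using f X unfolding inS_def by auto
    show "\<forall>u\<in>{X ! 1}. \<exists>Ob\<in>D. Ob ! 0 = u \<and> (Ob ! 1 \<in> {X ! 1} \<or> Ob ! 1 = X ! 0) \<and> (\<forall>Y\<in>D. F Ob Y \<noteq> Ob ! 1)"
      using X s ob by (intro ballI bexI[of _ "sw 0 X"]) auto
  qed (use X dm in auto)
  thus False by (rule flow)
qed


definition type1 :: "'a list \<Rightarrow> bool" where
  "type1 X \<longleftrightarrow> F X (sw 0 X) = X ! 0 \<and> F (sw 0 X) X = X ! 1"

lemma dom_of:
  assumes X: "X \<in> D" "sw 0 X \<in> D" and h: "F X (sw 0 X) = X ! 0" "F (sw 0 X) X = X ! 0"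
  shows "Dom (X ! 0) (X ! 1)"
  unfolding Dom_def
proof (intro ballI impI conjI)
  have s: "sw 0 X ! 0 = X ! 1" "sw 0 X ! 1 = X ! 0" using sw0D[OF X(1)] by auto
  fix X1 Y1 assume XY: "X1 \<in> D" "Y1 \<in> D" "X1 ! 0 = X ! 0" "Y1 ! 0 = X ! 1"
  have "F X1 Y1 = F X (sw 0 X)" by (rule CP) (use X XY s in auto)
  thus "F X1 Y1 = X ! 0" using h by simp
  have "F Y1 X1 = F (sw 0 X) X" by (rule CP) (use X XY s in auto)
  thus "F Y1 X1 = X ! 0" using h by simp
qed

lemma dich:
  assumes X: "X \<in> D" "sw 0 X \<in> D"
  shows "type1 X \<or> (F X (sw 0 X) = X ! 1 \<and> F (sw 0 X) X = X ! 0)"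
proof -
  have s: "sw 0 X ! 0 = X ! 1" "sw 0 X ! 1 = X ! 0" "sw 0 (sw 0 X) = X" using sw0D[OF X(1)] by auto
  have e1: "F X (sw 0 X) = X ! 0 \<or> F X (sw 0 X) = X ! 1"
    using sec1[OF X(1) X(2) X(2)] un[OF X(2)] s by simp
  have e2: "F (sw 0 X) X = X ! 1 \<or> F (sw 0 X) X = X ! 0"
    using sec1[OF X(2) X(1) X(1)] un[OF X(1)] s by simp
  have n1: "\<not> (F X (sw 0 X) = X ! 0 \<and> F (sw 0 X) X = X ! 0)"
  proof
    assume "F X (sw 0 X) = X ! 0 \<and> F (sw 0 X) X = X ! 0"
    hence "Dom (X ! 0) (X ! 1)" using dom_of[OF X] by auto
    moreover have "\<not> Dom (sw 0 X ! 1) (sw 0 X ! 0)" using NoDom[OF X(2)] s X by simp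
    ultimately show False using s by simp
  qed
  have n2: "\<not> (F X (sw 0 X) = X ! 1 \<and> F (sw 0 X) X = X ! 1)"
  proof
    assume h: "F X (sw 0 X) = X ! 1 \<and> F (sw 0 X) X = X ! 1"
    have "Dom (sw 0 X ! 0) (sw 0 X ! 1)" using dom_of[OF X(2)] h s X by simp
    moreover have "\<not> Dom (X ! 1) (X ! 0)" using NoDom[OF X] .
    ultimately show False using s by simp
  qed
  show ?thesis using e1 e2 n1 n2 unfolding type1_def by auto
qed

lemma SameType1:
  assumes X: "X \<in> D" "sw 0 X \<in> D" and Z: "Z \<in> D" "sw 0 Z \<in> D"
    and e: "X ! 0 = Z ! 0" and t: "type1 X"
  shows "type1 Z"
proof -
  have sx: "sw 0 X ! 0 = X ! 1" "sw 0 X ! 1 = X ! 0" using sw0D[OF X(1)] by auto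
  have sz: "sw 0 Z ! 0 = Z ! 1" "sw 0 Z ! 1 = Z ! 0" using sw0D[OF Z(1)] by auto
  have tx: "F X (sw 0 X) = X ! 0" "F (sw 0 X) X = X ! 1" using t unfolding type1_def by auto
  show ?thesis
  proof (cases "X ! 1 = Z ! 1")
    case True
    have "F X (sw 0 X) = F Z (sw 0 Z)" by (rule CP) (use X Z sx sz e True in auto)
    moreover have "F (sw 0 X) X = F (sw 0 Z) Z" by (rule CP) (use X Z sx sz e True in auto)
    ultimately show ?thesis using tx e True unfolding type1_def by simp
  next
    case False
    have "F (sw 0 X) Z = F (sw 0 X) X" by (rule CP) (use X Z sx sz e in auto)
    hence h: "F (sw 0 X) Z = X ! 1" using tx by simp
    have "F X (sw 0 Z) = X ! 0" by (rule C1) (use X Z e False h in auto)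
    moreover have "F X (sw 0 Z) = F Z (sw 0 Z)" by (rule CP) (use X Z sx sz e in auto)
    ultimately have "F Z (sw 0 Z) = Z ! 0" using e by simp
    thus ?thesis using dich[OF Z] d01[OF Z(1)] by auto
  qed
qed

lemma type1_sw: "X \<in> D \<Longrightarrow> sw 0 X \<in> D \<Longrightarrow> type1 X \<Longrightarrow> type1 (sw 0 X)"
  using sw0D[of X] unfolding type1_def by auto

lemma Uniform:
  assumes X: "X \<in> D" "sw 0 X \<in> D" and Z: "Z \<in> D" "sw 0 Z \<in> D" and t: "type1 X"
  shows "type1 Z"
proof -
  obtain ps where ps: "is_path D ps" "hd ps = X" "last ps = Z"
    using ctn X Z unfolding connected_two_neighbours_def connected_domain_def path_between_def by blast
  have ne: "ps \<noteq> []" using ps unfolding is_path_def by auto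
  have pD: "\<And>j. j < length ps \<Longrightarrow> ps ! j \<in> D" using ps unfolding is_path_def by auto
  have claim: "i < length ps \<Longrightarrow> \<exists>E\<in>D. sw 0 E \<in> D \<and> E ! 0 = ps ! i ! 0 \<and> type1 E" for i
  proof (induction i)
    case 0
    thus ?case using X t ps(2) ne by (intro bexI[of _ X]) (auto simp: hd_conv_nth)
  next
    case (Suc i)
    then obtain E where E: "E \<in> D" "sw 0 E \<in> D" "E ! 0 = ps ! i ! 0" "type1 E" by auto
    have "adjacent (ps ! i) (ps ! Suc i)" using ps Suc unfolding is_path_def by auto
    then obtain k where k: "Suc k < length (ps ! i)" "ps ! Suc i = sw k (ps ! i)"
      unfolding adjacent_sw by blast
    show ?case
    proof (cases "k = 0")
      case False
      thus ?thesis using E swk_0[OF k(1) False] k by auto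
    next
      case True
      let ?R = "ps ! i"
      have RD: "?R \<in> D" "sw 0 ?R \<in> D" using pD[of i] pD[of "Suc i"] Suc.prems k True by auto
      have "type1 ?R" using SameType1[OF E(1,2) RD E(3) E(4)] .
      hence "type1 (sw 0 ?R)" using type1_sw RD by auto
      moreover have "sw 0 (sw 0 ?R) \<in> D" using sw0D RD by auto
      ultimately show ?thesis using RD k True by (intro bexI[of _ "sw 0 ?R"]) auto
    qed
  qed
  obtain E where E: "E \<in> D" "sw 0 E \<in> D" "E ! 0 = ps ! (length ps - 1) ! 0" "type1 E"
    using claim[of "length ps - 1"] ne by auto
  have "ps ! (length ps - 1) = Z" using ps(3) ne by (simp add: last_conv_nth)
  thus ?thesis using SameType1[OF E(1,2) Z] E by simp
qed

lemma Dict1: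
  assumes all: "\<forall>X\<in>D. sw 0 X \<in> D \<longrightarrow> type1 X" and X: "X \<in> D" and Y: "Y \<in> D"
  shows "F X Y = X ! 0"
proof -
  obtain ps where ps: "is_path D ps" "hd ps = Y" "last ps = X"
    using ctn X Y unfolding connected_two_neighbours_def connected_domain_def path_between_def by blast
  have ne: "ps \<noteq> []" using ps unfolding is_path_def by auto
  have pD: "\<And>j. j < length ps \<Longrightarrow> ps ! j \<in> D" using ps unfolding is_path_def by auto
  have claim: "i < length ps \<Longrightarrow> inS (ps ! i ! 0) Y" for i
  proof (induction i)
    case 0
    have "ps ! 0 = Y" using ps(2) ne by (simp add: hd_conv_nth)
    thus ?case using un[OF Y] Y unfolding inS_def by auto
  next
    case (Suc i)
    then obtain X0 where X0: "X0 \<in> D" "F X0 Y = ps ! i ! 0" unfolding inS_def by auto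
    have "adjacent (ps ! i) (ps ! Suc i)" using ps Suc unfolding is_path_def by auto
    then obtain k where k: "Suc k < length (ps ! i)" "ps ! Suc i = sw k (ps ! i)"
      unfolding adjacent_sw by blast
    show ?case
    proof (cases "k = 0")
      case False
      thus ?thesis using X0 swk_0[OF k(1) False] k unfolding inS_def by auto
    next
      case True
      let ?R = "ps ! i"
      have RD: "?R \<in> D" "sw 0 ?R \<in> D" using pD[of i] pD[of "Suc i"] Suc.prems k True by auto
      have s: "sw 0 ?R ! 0 = ?R ! 1" "sw 0 ?R ! 1 = ?R ! 0" "sw 0 (sw 0 ?R) = ?R" using sw0D[OF RD(1)] by auto
      have tR: "type1 (sw 0 ?R)" using all RD s by auto
      have c: "F (sw 0 ?R) Y = sw 0 ?R ! 0 \<or> F (sw 0 ?R) Y = sw 0 ?R ! 1"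
        using sec1[OF RD(2) Y X0(1)] X0 s by simp
      have "F (sw 0 ?R) Y \<noteq> sw 0 ?R ! 1"
      proof
        assume "F (sw 0 ?R) Y = sw 0 ?R ! 1"
        hence "F (sw 0 ?R) ?R = ?R ! 0" using ML2[OF RD(2) Y RD(1)] s by simp
        moreover have "F (sw 0 ?R) ?R = ?R ! 1" using tR s unfolding type1_def by simp
        ultimately show False using d01[OF RD(1)] by simp
      qed
      hence "F (sw 0 ?R) Y = sw 0 ?R ! 0" using c by simp
      thus ?thesis using RD k True unfolding inS_def by auto
    qed
  qed
  have "ps ! (length ps - 1) = X" using ps(3) ne by (simp add: last_conv_nth)
  hence "inS (X ! 0) Y" using claim[of "length ps - 1"] ne by auto
  then obtain X0 where "X0 \<in> D" "F X0 Y = X ! 0" unfolding inS_def by auto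
  thus ?thesis using ML1 X Y by blast
qed

end

theorem two_main:
  assumes T: "tv A D F"
  shows "(\<forall>X\<in>D. \<forall>Y\<in>D. F X Y = X ! 0) \<or> (\<forall>X\<in>D. \<forall>Y\<in>D. F X Y = Y ! 0)"
proof -
  interpret tv A D F by (rule T)
  interpret S: tv A D "\<lambda>x y. F y x" by (rule tv_swap)
  show ?thesis
  proof (cases "\<exists>X\<in>D. sw 0 X \<in> D \<and> type1 X")
    case True
    then obtain X where X: "X \<in> D" "sw 0 X \<in> D" "type1 X" by auto
    have "\<forall>Z\<in>D. sw 0 Z \<in> D \<longrightarrow> type1 Z" using Uniform[OF X(1,2)] X(3) by blast
    thus ?thesis using Dict1 by blast
  next
    case False
    have "\<forall>Z\<in>D. sw 0 Z \<in> D \<longrightarrow> S.type1 Z"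
    proof (intro ballI impI)
      fix Z assume Z: "Z \<in> D" "sw 0 Z \<in> D"
      have "F Z (sw 0 Z) = Z ! 1 \<and> F (sw 0 Z) Z = Z ! 0" using dich[OF Z] False Z by auto
      thus "S.type1 Z" unfolding S.type1_def by simp
    qed
    hence "\<forall>X\<in>D. \<forall>Y\<in>D. F Y X = X ! 0" using S.Dict1 by blast
    thus ?thesis by blast
  qed
qed




definition GoodDom :: "'a set \<Rightarrow> 'a list set \<Rightarrow> bool" where
  "GoodDom A D \<longleftrightarrow> finite A \<and> card A \<ge> 3 \<and> is_domain A D \<and> minimally_rich A D \<and> connected_two_neighbours D"

definition scf_ok :: "'a set \<Rightarrow> 'a list set \<Rightarrow> nat \<Rightarrow> ('a list list \<Rightarrow> 'a) \<Rightarrow> bool" where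
  "scf_ok A D n f \<longleftrightarrow> (\<forall>Ps\<in>profiles D n. f Ps \<in> A) \<and> unanimous D n f \<and> strategy_proof D n f"

lemma gd_dD: "GoodDom A D \<Longrightarrow> P \<in> D \<Longrightarrow> distinct P \<and> set P = A"
  unfolding GoodDom_def is_domain_def linear_order_on_def by auto

lemma gd_other: "GoodDom A D \<Longrightarrow> \<exists>P\<in>D. P ! 0 \<noteq> x"
proof -
  assume G: "GoodDom A D"
  have "card A \<ge> 3" using G unfolding GoodDom_def by auto
  moreover have "A \<subseteq> {x} \<Longrightarrow> card A \<le> 1" using card_mono[of "{x}" A] by simp
  ultimately have "\<not> A \<subseteq> {x}" by linarith
  then obtain b where b: "b \<in> A" "b \<noteq> x" by auto
  then obtain P where "P \<in> D" "P ! 0 = b"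
    using G unfolding GoodDom_def minimally_rich_def top_alt_def by blast
  thus ?thesis using b by blast
qed

lemma prof_nth: "Ps \<in> profiles D n \<Longrightarrow> i < n \<Longrightarrow> Ps ! i \<in> D"
  unfolding profiles_def by auto

lemma prof_upd: "Ps \<in> profiles D n \<Longrightarrow> P \<in> D \<Longrightarrow> Ps[i := P] \<in> profiles D n"
  unfolding profiles_def by (auto dest: set_update_subset_insert[THEN subsetD])

lemma sp_wp:
  assumes G: "GoodDom A D" and S: "scf_ok A D n f" and Ps: "Ps \<in> profiles D n" and i: "i < n"
    and P': "P' \<in> D"
  shows "wp (Ps ! i) (f Ps) (f (Ps[i := P']))"
proof -
  have "\<not> prefers (Ps ! i) (f (Ps[i := P'])) (f Ps)"
    using S Ps i P' unfolding scf_ok_def strategy_proof_def by auto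
  moreover have "f Ps \<in> A" "f (Ps[i := P']) \<in> A" using S Ps prof_upd[OF Ps P'] unfolding scf_ok_def by auto
  moreover have "set (Ps ! i) = A" using gd_dD[OF G prof_nth[OF Ps i]] by auto
  ultimately show ?thesis unfolding wp_def using prefers_total by metis
qed

lemma two_list:
  assumes G: "GoodDom A D" and S: "scf_ok A D 2 f"
  shows "dictatorial D 2 f"
proof -
  define F where "F = (\<lambda>P1 P2. f [P1, P2])"
  have pr: "P1 \<in> D \<Longrightarrow> P2 \<in> D \<Longrightarrow> [P1, P2] \<in> profiles D 2" for P1 P2
    unfolding profiles_def by auto
  have T: "tv A D F"
  proof
    show "finite A" "3 \<le> card A" "is_domain A D" "connected_two_neighbours D"
      using G unfolding GoodDom_def by auto
    show "F P1 P2 \<in> A" if "P1 \<in> D" "P2 \<in> D" for P1 P2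
      using S pr[OF that] unfolding scf_ok_def F_def by auto
    show "F P P = P ! 0" if "P \<in> D" for P
    proof -
      have "\<forall>i<2. top_alt ([P, P] ! i) = top_alt P" by (auto simp: less_2_cases_iff)
      thus ?thesis using S pr[OF that that] unfolding scf_ok_def unanimous_def F_def top_alt_def by blast
    qed
    show "\<not> prefers P1 (F P1' P2) (F P1 P2)" if "P1 \<in> D" "P1' \<in> D" "P2 \<in> D" for P1 P1' P2
    proof -
      have h: "\<forall>i<2. \<forall>P'\<in>D. \<not> prefers ([P1, P2] ! i) (f ([P1, P2][i := P'])) (f [P1, P2])"
        using S pr[OF that(1,3)] unfolding scf_ok_def strategy_proof_def by blast
      have "\<not> prefers ([P1, P2] ! 0) (f ([P1, P2][0 := P1'])) (f [P1, P2])"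
        using h[rule_format, of 0 P1'] that by simp
      thus ?thesis unfolding F_def by simp
    qed
    show "\<not> prefers P2 (F P1 P2') (F P1 P2)" if "P1 \<in> D" "P2 \<in> D" "P2' \<in> D" for P1 P2 P2'
    proof -
      have h: "\<forall>i<2. \<forall>P'\<in>D. \<not> prefers ([P1, P2] ! i) (f ([P1, P2][i := P'])) (f [P1, P2])"
        using S pr[OF that(1,2)] unfolding scf_ok_def strategy_proof_def by blast
      have "\<not> prefers ([P1, P2] ! 1) (f ([P1, P2][1 := P2'])) (f [P1, P2])"
        using h[rule_format, of 1 P2'] that by simp
      thus ?thesis unfolding F_def by simp
    qed
  qed
  have l2: "Ps \<in> profiles D 2 \<Longrightarrow> Ps = [Ps ! 0, Ps ! 1] \<and> Ps ! 0 \<in> D \<and> Ps ! 1 \<in> D" for Ps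
    unfolding profiles_def
    by (cases Ps; cases "tl Ps"; auto)
  from two_main[OF T] show ?thesis
  proof
    assume "\<forall>X\<in>D. \<forall>Y\<in>D. F X Y = X ! 0"
    hence "\<forall>Ps\<in>profiles D 2. f Ps = top_alt (Ps ! 0)"
      unfolding F_def top_alt_def using l2 by (metis (no_types))
    thus ?thesis unfolding dictatorial_def by (intro exI[of _ 0]) auto
  next
    assume "\<forall>X\<in>D. \<forall>Y\<in>D. F X Y = Y ! 0"
    hence "\<forall>Ps\<in>profiles D 2. f Ps = top_alt (Ps ! 1)"
      unfolding F_def top_alt_def using l2 by metis
    thus ?thesis unfolding dictatorial_def by (intro exI[of _ 1]) auto
  qed
qed


definition upd :: "nat set \<Rightarrow> 'a \<Rightarrow> 'a list \<Rightarrow> 'a list" where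
  "upd J P' Ps = map (\<lambda>i. if i \<in> J then P' else Ps ! i) [0..<length Ps]"

lemma upd_prof: "Ps \<in> profiles D m \<Longrightarrow> P' \<in> D \<Longrightarrow> upd J P' Ps \<in> profiles D m"
proof -
  assume Ps: "Ps \<in> profiles D m" and P': "P' \<in> D"
  have "set (upd J P' Ps) \<subseteq> D"
  proof
    fix x assume "x \<in> set (upd J P' Ps)"
    then obtain i where i: "i < length Ps" "x = (if i \<in> J then P' else Ps ! i)"
      unfolding upd_def by auto
    show "x \<in> D" using i P' Ps nth_mem[OF i(1)] unfolding profiles_def by (auto split: if_splits)
  qed
  thus ?thesis using Ps unfolding profiles_def upd_def by simp
qed

lemma chain:
  assumes G: "GoodDom A D" and S: "scf_ok A D m f" and Ps: "Ps \<in> profiles D m"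
    and P: "P \<in> D" and P': "P' \<in> D"
  shows "finite J \<Longrightarrow> J \<subseteq> {..<m} \<Longrightarrow> (\<forall>i\<in>J. Ps ! i = P) \<Longrightarrow> wp P (f Ps) (f (upd J P' Ps))"
proof (induction J rule: finite_induct)
  case empty
  have "upd {} P' Ps = Ps" unfolding upd_def by (simp add: map_nth)
  thus ?case unfolding wp_def by simp
next
  case (insert j J)
  have lm: "length Ps = m" using Ps unfolding profiles_def by auto
  have jm: "j < m" using insert by auto
  have ih: "wp P (f Ps) (f (upd J P' Ps))" using insert by auto
  have P1: "upd J P' Ps \<in> profiles D m" using upd_prof[OF Ps P'] .
  have Pj: "upd J P' Ps ! j = P" using insert.hyps(2) insert.prems(2) jm lm unfolding upd_def by simp
  have eq: "upd (insert j J) P' Ps = (upd J P' Ps)[j := P']"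
    by (rule nth_equalityI) (use jm lm in \<open>auto simp: upd_def nth_list_update\<close>)
  have "wp (upd J P' Ps ! j) (f (upd J P' Ps)) (f ((upd J P' Ps)[j := P']))"
    by (rule sp_wp[OF G S P1 jm P'])
  hence "wp P (f (upd J P' Ps)) (f (upd (insert j J) P' Ps))" using Pj eq by simp
  thus ?case using wp_trans[OF conjunct1[OF gd_dD[OF G P]] ih] by blast
qed

lemma merge_ok:
  assumes G: "GoodDom A D" and S: "scf_ok A D m f" and pi: "\<forall>i<m. \<pi> i < k"
  shows "scf_ok A D k (\<lambda>Qs. f (map (\<lambda>i. Qs ! \<pi> i) [0..<m]))"
proof -
  have mp: "map (\<lambda>i. Qs ! \<pi> i) [0..<m] \<in> profiles D m" if "Qs \<in> profiles D k" for Qs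
  proof -
    have "set (map (\<lambda>i. Qs ! \<pi> i) [0..<m]) \<subseteq> D"
    proof
      fix x assume "x \<in> set (map (\<lambda>i. Qs ! \<pi> i) [0..<m])"
      then obtain i where i: "i < m" "x = Qs ! \<pi> i" by auto
      show "x \<in> D" using prof_nth[OF that] pi i by auto
    qed
    thus ?thesis unfolding profiles_def by simp
  qed
  show ?thesis
    unfolding scf_ok_def
  proof (intro conjI)
    show "\<forall>Qs\<in>profiles D k. f (map (\<lambda>i. Qs ! \<pi> i) [0..<m]) \<in> A"
      using mp S unfolding scf_ok_def by auto
    show "unanimous D k (\<lambda>Qs. f (map (\<lambda>i. Qs ! \<pi> i) [0..<m]))"
      unfolding unanimous_def
    proof (intro ballI allI impI)
      fix Qs a assume Qs: "Qs \<in> profiles D k" and t: "\<forall>i<k. top_alt (Qs ! i) = a"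
      have "\<forall>i<m. top_alt (map (\<lambda>i. Qs ! \<pi> i) [0..<m] ! i) = a" using t pi by auto
      thus "f (map (\<lambda>i. Qs ! \<pi> i) [0..<m]) = a"
        using S mp[OF Qs] unfolding scf_ok_def unanimous_def by blast
    qed
    show "strategy_proof D k (\<lambda>Qs. f (map (\<lambda>i. Qs ! \<pi> i) [0..<m]))"
      unfolding strategy_proof_def
    proof (intro ballI allI impI)
      fix Qs l P' assume Qs: "Qs \<in> profiles D k" and l: "l < k" and P': "P' \<in> D"
      define Ps where "Ps = map (\<lambda>i. Qs ! \<pi> i) [0..<m]"
      define J where "J = {i. i < m \<and> \<pi> i = l}"
      have lq: "length Qs = k" using Qs unfolding profiles_def by auto
      have PD: "Qs ! l \<in> D" using prof_nth[OF Qs l] .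
      have eq: "map (\<lambda>i. Qs[l := P'] ! \<pi> i) [0..<m] = upd J P' Ps"
        by (rule nth_equalityI) (use pi lq in \<open>auto simp: upd_def Ps_def J_def nth_list_update\<close>)
      have "wp (Qs ! l) (f Ps) (f (upd J P' Ps))"
        by (rule chain[OF G S _ PD P']) (use mp[OF Qs] in \<open>auto simp: Ps_def J_def\<close>)
      hence "\<not> prefers (Qs ! l) (f (upd J P' Ps)) (f Ps)"
        using wp_not_prefers[of "Qs ! l" "f Ps" "f (upd J P' Ps)"] gd_dD[OF G PD] by blast
      thus "\<not> prefers (Qs ! l) (f (map (\<lambda>i. Qs[l := P'] ! \<pi> i) [0..<m])) (f (map (\<lambda>i. Qs ! \<pi> i) [0..<m]))"
        using eq by (simp add: Ps_def)
    qed
  qed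
qed

lemma pair_merge:
  assumes G: "GoodDom A D" and IH: "\<forall>g. scf_ok A D n g \<longrightarrow> dictatorial D n g"
    and S: "scf_ok A D (Suc n) f" and pq: "p < Suc n" "q < Suc n" "p \<noteq> q"
  shows "\<exists>j<Suc n. j \<noteq> q \<and> (\<forall>Ps\<in>profiles D (Suc n). Ps ! p = Ps ! q \<longrightarrow> f Ps = top_alt (Ps ! j))"
proof -
  define rk where "rk = (\<lambda>i::nat. if i < q then i else i - 1)"
  define unrk where "unrk = (\<lambda>l::nat. if l < q then l else Suc l)"
  define pi where "pi = (\<lambda>i. if i = q then rk p else rk i)"
  have pib: "\<forall>i<Suc n. pi i < n" using pq by (auto simp: pi_def rk_def)
  have ur: "\<And>i. i < Suc n \<Longrightarrow> unrk (pi i) = (if i = q then p else i)"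
    using pq by (auto simp: pi_def rk_def unrk_def)
  have "dictatorial D n (\<lambda>Qs. f (map (\<lambda>i. Qs ! pi i) [0..<Suc n]))"
    using IH merge_ok[OF G S pib] by blast
  then obtain l where l: "l < n" and dl: "\<forall>Qs\<in>profiles D n. f (map (\<lambda>i. Qs ! pi i) [0..<Suc n]) = top_alt (Qs ! l)"
    unfolding dictatorial_def by blast
  show ?thesis
  proof (intro exI[of _ "unrk l"] conjI ballI impI)
    show "unrk l < Suc n" using l by (auto simp: unrk_def)
    show "unrk l \<noteq> q" by (auto simp: unrk_def)
    fix Ps assume Ps: "Ps \<in> profiles D (Suc n)" and e: "Ps ! p = Ps ! q"
    define Qs where "Qs = map (\<lambda>l. Ps ! unrk l) [0..<n]"
    have lP: "length Ps = Suc n" using Ps unfolding profiles_def by auto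
    have Qs: "Qs \<in> profiles D n"
    proof -
      have "set Qs \<subseteq> D"
      proof
        fix x assume "x \<in> set Qs"
        then obtain i where i: "i < n" "x = Ps ! unrk i" unfolding Qs_def by auto
        have "unrk i < Suc n" using i by (auto simp: unrk_def)
        thus "x \<in> D" using prof_nth[OF Ps] i by auto
      qed
      thus ?thesis unfolding profiles_def Qs_def by simp
    qed
    have "map (\<lambda>i. Qs ! pi i) [0..<Suc n] = Ps"
    proof (rule nth_equalityI)
      show "length (map (\<lambda>i. Qs ! pi i) [0..<Suc n]) = length Ps" using lP by (simp del: upt_Suc)
      fix i assume "i < length (map (\<lambda>i. Qs ! pi i) [0..<Suc n])"
      hence i: "i < Suc n" by (simp del: upt_Suc)
      have "map (\<lambda>i. Qs ! pi i) [0..<Suc n] ! i = Qs ! pi i"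
        using i by (simp del: upt_Suc)
      also have "\<dots> = Ps ! unrk (pi i)"
        using i pib by (simp add: Qs_def)
      also have "\<dots> = Ps ! i" using ur[OF i] e by auto
      finally show "map (\<lambda>i. Qs ! pi i) [0..<Suc n] ! i = Ps ! i" .
    qed
    hence "f Ps = top_alt (Qs ! l)" using dl Qs by metis
    thus "f Ps = top_alt (Ps ! unrk l)" using l by (simp add: Qs_def)
  qed
qed


lemma caseI:
  assumes G: "GoodDom A D" and S: "scf_ok A D m f" and pq: "p < m" "q < m" "p \<noteq> q"
    and H: "\<forall>Ps\<in>profiles D m. Ps ! p = Ps ! q \<longrightarrow> f Ps = top_alt (Ps ! p)"
  shows "dictatorial D m f"
proof -
  define V where "V = (\<lambda>p' q' Bs. \<forall>P1\<in>D. \<forall>P2\<in>D. f (Bs[p' := P1, q' := P2]) = P1 ! 0)"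
  have sw_pq: "Bs[q := P1, p := P2] = Bs[p := P2, q := P1]" for Bs :: "'a list list" and P1 P2
    using pq by (simp add: list_update_swap)
  have tvB: "tv A D (\<lambda>P1 P2. f (Bs[p := P1, q := P2]))" if Bs: "Bs \<in> profiles D m" for Bs
  proof
    show "finite A" "3 \<le> card A" "is_domain A D" "connected_two_neighbours D"
      using G unfolding GoodDom_def by auto
    have pr: "P1 \<in> D \<Longrightarrow> P2 \<in> D \<Longrightarrow> Bs[p := P1, q := P2] \<in> profiles D m" for P1 P2
      using prof_upd Bs by blast
    have lB: "length Bs = m" using Bs unfolding profiles_def by auto
    show "f (Bs[p := P1, q := P2]) \<in> A" if "P1 \<in> D" "P2 \<in> D" for P1 P2
      using S pr[OF that] unfolding scf_ok_def by auto
    show "f (Bs[p := P, q := P]) = P ! 0" if "P \<in> D" for P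
    proof -
      have "Bs[p := P, q := P] ! p = Bs[p := P, q := P] ! q" using pq lB by (simp add: nth_list_update)
      moreover have "Bs[p := P, q := P] ! p = P" using pq lB by (simp add: nth_list_update)
      ultimately show ?thesis using H pr[OF that that] unfolding top_alt_def by auto
    qed
    show "\<not> prefers P1 (f (Bs[p := P1', q := P2])) (f (Bs[p := P1, q := P2]))"
      if "P1 \<in> D" "P1' \<in> D" "P2 \<in> D" for P1 P1' P2
    proof -
      have h: "\<forall>i<m. \<forall>P'\<in>D. \<not> prefers (Bs[p := P1, q := P2] ! i) (f ((Bs[p := P1, q := P2])[i := P'])) (f (Bs[p := P1, q := P2]))"
        using S pr[OF that(1,3)] unfolding scf_ok_def strategy_proof_def by blast
      have "Bs[p := P1, q := P2] ! p = P1" using pq lB by (simp add: nth_list_update)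
      moreover have "(Bs[p := P1, q := P2])[p := P1'] = Bs[p := P1', q := P2]"
        using pq by (simp add: list_update_swap)
      ultimately show ?thesis using h[rule_format, OF pq(1) that(2)] by simp
    qed
    show "\<not> prefers P2 (f (Bs[p := P1, q := P2'])) (f (Bs[p := P1, q := P2]))"
      if "P1 \<in> D" "P2 \<in> D" "P2' \<in> D" for P1 P2 P2'
    proof -
      have h: "\<forall>i<m. \<forall>P'\<in>D. \<not> prefers (Bs[p := P1, q := P2] ! i) (f ((Bs[p := P1, q := P2])[i := P'])) (f (Bs[p := P1, q := P2]))"
        using S pr[OF that(1,2)] unfolding scf_ok_def strategy_proof_def by blast
      have "Bs[p := P1, q := P2] ! q = P2" using pq lB by (simp add: nth_list_update)
      moreover have "(Bs[p := P1, q := P2])[q := P2'] = Bs[p := P1, q := P2']" by simp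
      ultimately show ?thesis using h[rule_format, OF pq(2) that(3)] by simp
    qed
  qed
  have dich: "V p q Bs \<or> V q p Bs" if Bs: "Bs \<in> profiles D m" for Bs
  proof -
    from two_main[OF tvB[OF Bs]] show ?thesis
    proof
      assume "\<forall>X\<in>D. \<forall>Y\<in>D. f (Bs[p := X, q := Y]) = X ! 0"
      thus ?thesis unfolding V_def by blast
    next
      assume "\<forall>X\<in>D. \<forall>Y\<in>D. f (Bs[p := X, q := Y]) = Y ! 0"
      hence "V q p Bs" unfolding V_def using sw_pq by simp
      thus ?thesis by blast
    qed
  qed
  have single: "False" if Bs: "Bs \<in> profiles D m" and i: "i < m" "i \<noteq> p'" "i \<noteq> q'" and Q: "Q \<in> D"
    and pq': "p' < m" "q' < m" "p' \<noteq> q'" and v1: "V p' q' Bs" and v2: "V q' p' (Bs[i := Q])" for Bs i p' q' Q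
  proof -
    obtain P2 where P2: "P2 \<in> D" "P2 ! 0 \<noteq> Q ! 0" using gd_other[OF G] by blast
    have lB: "length Bs = m" using Bs unfolding profiles_def by auto
    define X where "X = (Bs[i := Q])[q' := P2, p' := Q]"
    have XP: "X \<in> profiles D m" unfolding X_def
      by (intro prof_upd Bs Q P2)
    have fX: "f X = P2 ! 0" using v2[unfolded V_def, rule_format, OF P2(1) Q] unfolding X_def .
    have Xi: "X ! i = Q" using i lB by (simp add: X_def nth_list_update)
    have BiD: "Bs ! i \<in> D" using prof_nth[OF Bs i(1)] .
    have "X[i := Bs ! i] = Bs[p' := Q, q' := P2]"
    proof (rule nth_equalityI)
      show "length (X[i := Bs ! i]) = length (Bs[p' := Q, q' := P2])" by (simp add: X_def)
      fix j assume "j < length (X[i := Bs ! i])"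
      hence j: "j < m" using lB by (simp add: X_def)
      show "X[i := Bs ! i] ! j = Bs[p' := Q, q' := P2] ! j"
        using i pq' lB j unfolding X_def by (simp add: nth_list_update)
    qed
    hence fX': "f (X[i := Bs ! i]) = Q ! 0" using v1[unfolded V_def, rule_format, OF Q P2(1)] by simp
    have "wp (X ! i) (f X) (f (X[i := Bs ! i]))" by (rule sp_wp[OF G S XP i(1) BiD])
    hence "wp Q (P2 ! 0) (Q ! 0)" using Xi fX fX' by simp
    hence "P2 ! 0 = Q ! 0" using wp_top[of Q "P2 ! 0"] gd_dD[OF G Q] by blast
    thus False using P2 by simp
  qed
  have propg: "V p' q' (Bs[i := Q])"
    if Bs: "Bs \<in> profiles D m" and i: "i < m" and Q: "Q \<in> D" and pq': "(p' = p \<and> q' = q) \<or> (p' = q \<and> q' = p)"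
      and v: "V p' q' Bs" for Bs i p' q' Q
  proof (cases "i = p' \<or> i = q'")
    case True
    have "(Bs[i := Q])[p' := P1, q' := P2] = Bs[p' := P1, q' := P2]" for P1 P2
      using True pq' pq by (auto simp: list_update_swap)
    thus ?thesis using v unfolding V_def by simp
  next
    case False
    have B': "Bs[i := Q] \<in> profiles D m" using prof_upd Bs Q by blast
    have "V p' q' (Bs[i := Q]) \<or> V q' p' (Bs[i := Q])" using dich[OF B'] pq' by blast
    moreover have "\<not> V q' p' (Bs[i := Q])"
      using single[OF Bs i] False Q pq' pq v by blast
    ultimately show ?thesis by blast
  qed
  have chainV: "\<forall>Bs\<in>profiles D m. \<forall>Bs'\<in>profiles D m. (\<forall>i. k \<le> i \<longrightarrow> i < m \<longrightarrow> Bs ! i = Bs' ! i) \<longrightarrow> V p' q' Bs \<longrightarrow> V p' q' Bs'"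
    if pq': "(p' = p \<and> q' = q) \<or> (p' = q \<and> q' = p)" for k p' q'
  proof (induction k)
    case 0
    show ?case
    proof (intro ballI impI)
      fix Bs Bs' assume B: "Bs \<in> profiles D m" "Bs' \<in> profiles D m"
        and a: "\<forall>i. 0 \<le> i \<longrightarrow> i < m \<longrightarrow> Bs ! i = Bs' ! i" and v: "V p' q' Bs"
      have "Bs = Bs'" using B a unfolding profiles_def by (auto intro: nth_equalityI)
      thus "V p' q' Bs'" using v by simp
    qed
  next
    case (Suc k)
    show ?case
    proof (intro ballI impI)
      fix Bs Bs' assume B: "Bs \<in> profiles D m" "Bs' \<in> profiles D m"
        and a: "\<forall>i. Suc k \<le> i \<longrightarrow> i < m \<longrightarrow> Bs ! i = Bs' ! i" and v: "V p' q' Bs"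
      show "V p' q' Bs'"
      proof (cases "k < m")
        case False
        hence "\<forall>i. k \<le> i \<longrightarrow> i < m \<longrightarrow> Bs ! i = Bs' ! i" by auto
        thus ?thesis using Suc.IH B v by blast
      next
        case True
        define B2 where "B2 = Bs'[k := Bs ! k]"
        have lB: "length Bs = m" "length Bs' = m" using B unfolding profiles_def by auto
        have B2P: "B2 \<in> profiles D m" unfolding B2_def using prof_upd B prof_nth[OF B(1) True] by blast
        have "\<forall>i. k \<le> i \<longrightarrow> i < m \<longrightarrow> Bs ! i = B2 ! i"
          using a lB True by (auto simp: B2_def nth_list_update)
        hence v2: "V p' q' B2" using Suc.IH B(1) B2P v by blast
        have "B2[k := Bs' ! k] = Bs'" using lB True by (simp add: B2_def)
        moreover have "V p' q' (B2[k := Bs' ! k])"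
          by (rule propg[OF B2P True prof_nth[OF B(2) True] pq' v2])
        ultimately show ?thesis by simp
      qed
    qed
  qed
  obtain P0 where P0: "P0 \<in> D" using gd_other[OF G] by blast
  define B0 where "B0 = replicate m P0"
  have B0P: "B0 \<in> profiles D m" using P0 unfolding B0_def profiles_def by auto
  have dict: "dictatorial D m f" if pq': "(p' = p \<and> q' = q) \<or> (p' = q \<and> q' = p)" and v0: "V p' q' B0" for p' q'
  proof -
    have pm: "p' < m" "q' < m" using pq' pq by auto
    have "\<forall>Ps\<in>profiles D m. f Ps = top_alt (Ps ! p')"
    proof
      fix Ps assume Ps: "Ps \<in> profiles D m"
      have "V p' q' Ps" using chainV[OF pq', of m] B0P Ps v0 by auto
      moreover have "Ps[p' := Ps ! p', q' := Ps ! q'] = Ps" by simp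
      ultimately show "f Ps = top_alt (Ps ! p')"
        using prof_nth[OF Ps pm(1)] prof_nth[OF Ps pm(2)] unfolding V_def top_alt_def by metis
    qed
    thus ?thesis unfolding dictatorial_def using pm by blast
  qed
  show ?thesis using dich[OF B0P] dict by blast
qed

theorem ram:
  assumes G: "GoodDom A D"
  shows "2 \<le> n \<Longrightarrow> \<forall>f. scf_ok A D n f \<longrightarrow> dictatorial D n f"
proof (induction n rule: nat_induct_at_least)
  case base
  show ?case using two_list[OF G] by blast
next
  case (Suc n)
  show ?case
  proof (intro allI impI)
    fix f assume S: "scf_ok A D (Suc n) f"
    obtain P where P: "P \<in> D" using gd_other[OF G] by blast
    obtain P' where P': "P' \<in> D" "P' ! 0 \<noteq> P ! 0" using gd_other[OF G] by blast
    have n2: "2 \<le> n" by (rule Suc.hyps)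
    define m where "m = Suc n"
    define R where "R = replicate m P"
    have RP: "R \<in> profiles D (Suc n)" using P unfolding R_def profiles_def m_def by auto
    have rep: "\<And>i k Q. i < m \<Longrightarrow> k < m \<Longrightarrow> R[k := Q] ! i = (if i = k then Q else P)"
      unfolding R_def by (simp add: nth_list_update)
    have m1: "0 < m" "1 < m" using n2 by (auto simp: m_def)
    have "\<exists>j<Suc n. j \<noteq> 1 \<and> (\<forall>Ps\<in>profiles D (Suc n). Ps ! 0 = Ps ! 1 \<longrightarrow> f Ps = top_alt (Ps ! j))"
      by (rule pair_merge[OF G Suc.IH S]) (use n2 in auto)
    then obtain j where j: "j < Suc n" "j \<noteq> 1"
      and H1: "\<forall>Ps\<in>profiles D (Suc n). Ps ! 0 = Ps ! 1 \<longrightarrow> f Ps = top_alt (Ps ! j)"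
      by blast
    show "dictatorial D (Suc n) f"
    proof (cases "j = 0")
      case True
      have "\<forall>Ps\<in>profiles D (Suc n). Ps ! 0 = Ps ! 1 \<longrightarrow> f Ps = top_alt (Ps ! 0)"
        using H1 True by simp
      from caseI[OF G S _ _ _ this] n2 show ?thesis by simp
    next
      case False
      have "\<exists>r<Suc n. r \<noteq> j \<and> (\<forall>Ps\<in>profiles D (Suc n). Ps ! 0 = Ps ! j \<longrightarrow> f Ps = top_alt (Ps ! r))"
        by (rule pair_merge[OF G Suc.IH S]) (use j False in auto)
      then obtain r where r: "r < Suc n" "r \<noteq> j"
        and H2: "\<forall>Ps\<in>profiles D (Suc n). Ps ! 0 = Ps ! j \<longrightarrow> f Ps = top_alt (Ps ! r)"
        by blast
      show ?thesis
      proof (cases "r = 0")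
        case True
        have "\<forall>Ps\<in>profiles D (Suc n). Ps ! 0 = Ps ! j \<longrightarrow> f Ps = top_alt (Ps ! 0)"
          using H2 True by simp
        from caseI[OF G S _ _ _ this] j False show ?thesis by simp
      next
        case r0: False
        show ?thesis
        proof (cases "r = 1")
          case True
          define Ps where "Ps = R[j := P']"
          have Ps: "Ps \<in> profiles D (Suc n)" unfolding Ps_def by (rule prof_upd[OF RP P'(1)])
          have jm: "j < m" using j by (simp add: m_def)
          have e1: "Ps ! 0 = P" "Ps ! 1 = P" "Ps ! j = P'"
            using rep[OF m1(1) jm, of P'] rep[OF m1(2) jm, of P'] rep[OF jm jm, of P'] j False
            by (auto simp: Ps_def)
          have f1: "f Ps = P' ! 0" using H1[rule_format, OF Ps] e1 unfolding top_alt_def by simp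
          define Ps' where "Ps' = Ps[0 := P']"
          have Ps': "Ps' \<in> profiles D (Suc n)" unfolding Ps'_def by (rule prof_upd[OF Ps P'(1)])
          have lPs: "length Ps = m" using Ps unfolding profiles_def m_def by simp
          have e2: "Ps' ! 0 = P'" "Ps' ! 1 = P" "Ps' ! j = P'"
            using e1 j False m1 lPs by (auto simp: Ps'_def nth_list_update)
          have f2: "f Ps' = P ! 0" using H2[rule_format, OF Ps'] e2 True unfolding top_alt_def by simp
          have "wp (Ps ! 0) (f Ps) (f Ps')" unfolding Ps'_def by (rule sp_wp[OF G S Ps _ P'(1)]) simp
          hence "wp P (P' ! 0) (P ! 0)" using e1 f1 f2 by simp
          hence "P' ! 0 = P ! 0" using wp_top[of P "P' ! 0"] gd_dD[OF G P] by blast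
          thus ?thesis using P' by simp
        next
          case r1: False
          define Ps where "Ps = R[r := P']"
          have Ps: "Ps \<in> profiles D (Suc n)" unfolding Ps_def by (rule prof_upd[OF RP P'(1)])
          have jm: "j < m" "r < m" using j r by (auto simp: m_def)
          have e1: "Ps ! 0 = P" "Ps ! 1 = P" "Ps ! j = P" "Ps ! r = P'"
            using rep[OF m1(1) jm(2), of P'] rep[OF m1(2) jm(2), of P'] rep[OF jm(1) jm(2), of P']
              rep[OF jm(2) jm(2), of P'] j r r0 r1
            by (auto simp: Ps_def)
          have "f Ps = P ! 0" using H1[rule_format, OF Ps] e1 unfolding top_alt_def by simp
          moreover have "f Ps = P' ! 0" using H2[rule_format, OF Ps] e1 unfolding top_alt_def by simp
          ultimately show ?thesis using P' by simp
        qed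
      qed
    qed
  qed
qed



theorem theorem3:
  fixes A :: "'a set" and D :: "'a list set" and n :: nat
    and f :: "'a list list \<Rightarrow> 'a"
  assumes "finite A" and "card A \<ge> 3" and "n \<ge> 2"
    and "is_domain A D" and "minimally_rich A D"
    and "connected_two_neighbours D"
    and "\<forall>Ps\<in>profiles D n. f Ps \<in> A"
    and "unanimous D n f" and "strategy_proof D n f"
  shows "dictatorial D n f"
proof -
  have G: "GoodDom A D" unfolding GoodDom_def using assms by auto
  have S: "scf_ok A D n f" unfolding scf_ok_def using assms by auto
  show ?thesis using ram[OF G assms(3)] S by blast
qed

end
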